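(* Let $N\ge 2$, $\mathcal{A}=\{1,\dots,N\}$, let $\boldsymbol{\lambda}\in\mathbb{R}_+^N$, $\boldsymbol{\delta}\in\mathbb{R}^N$ with $\delta_i>0$ for all $i$, and let $B=[b_{i,j}]\in\mathbb{R}_+^{N\times N}$ with zero diagonal, such that the directed graph $\mathcal{G}$ on $\mathcal{A}$ with an edge $(j,i)$ iff $b_{i,j}>0$ is weakly connected but not strongly connected. Let $\mathcal{S}\subset\mathbb{R}_+^N$ be convex and, for each $i$, let $q_i:\mathbb{R}_+\to(0,1]$ be decreasing, strictly convex and continuously differentiable; write $\mathbf{q}(\mathbf{s})=(q_i(s_i))_{i\in\mathcal{A}}$. Then for every fixed $\mathbf{s}\in\mathcal{S}$, the system $$\dot{\mathbf{p}}(t)=(\mathbf{1}-\mathbf{p}(t))\circ\mathbf{q}(\mathbf{s})\circ\big(\boldsymbol{\lambda}+B\mathbf{p}(t)\big)-\boldsymbol{\delta}\circ\mathbf{p}(t),\qquad \mathbf{p}(0)\in[0,1]^N,$$ has a unique stable equilibrium $\bar{\mathbf{p}}(\mathbf{s})$, and it satisfies $$(\mathbf{1}-\mathbf{p})\circ(\boldsymbol{\lambda}+B\mathbf{p})-\mathbf{q}(\mathbf{s})^{-1}\circ\boldsymbol{\delta}\circ\mathbf{p}=\mathbf{0}.$$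
   Context: $\circ$ denotes the element-wise product, and $\mathbf{q}(\mathbf{s})^{-1}=(q_i(s_i)^{-1})_{i}$ denotes the element-wise inverse. In the model, $\lambda_i>0$ for $i$ in a nonempty proper subset $\mathcal{A}_p\subsetneq\mathcal{A}$ and $\lambda_i=0$ otherwise; $b_{i,j}=\beta_{j,i}$ is the rate at which infection of system $j$ infects system $i$; $p_i(t)$ is the probability that system $i$ is infected at time $t$. *)

theory Defs
  imports "HOL-Analysis.Analysis"
begin

definition strictly_convex_on :: "real set \<Rightarrow> (real \<Rightarrow> real) \<Rightarrow> bool" where
  "strictly_convex_on A f \<longleftrightarrow> convex A \<and>
     (\<forall>x\<in>A. \<forall>y\<in>A. \<forall>u::real. x \<noteq> y \<and> 0 < u \<and> u < 1 \<longrightarrow>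
        f (u * x + (1 - u) * y) < u * f x + (1 - u) * f y)"

definition unit_cube :: "(real ^ 'n) set" where
  "unit_cube = {p. \<forall>i. 0 \<le> p $ i \<and> p $ i \<le> 1}"

definition sis_field ::
  "(real ^ 'n) \<Rightarrow> (real ^ 'n ^ 'n) \<Rightarrow> (real ^ 'n) \<Rightarrow> ('n \<Rightarrow> real \<Rightarrow> real) \<Rightarrow> (real ^ 'n)
     \<Rightarrow> (real ^ 'n) \<Rightarrow> (real ^ 'n)" where
  "sis_field lam B del q s p =
     (\<chi> i. (1 - p $ i) * q i (s $ i) * (lam $ i + (B *v p) $ i) - del $ i * p $ i)"

definition ode_solution :: "('a::real_normed_vector \<Rightarrow> 'a) \<Rightarrow> (real \<Rightarrow> 'a) \<Rightarrow> bool" where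
  "ode_solution F x \<longleftrightarrow> (\<forall>t\<ge>0. (x has_vector_derivative F (x t)) (at t within {0..}))"

definition equilibrium :: "('a::real_normed_vector \<Rightarrow> 'a) \<Rightarrow> 'a set \<Rightarrow> 'a \<Rightarrow> bool" where
  "equilibrium F X p \<longleftrightarrow> p \<in> X \<and> F p = 0"

definition lyapunov_stable :: "('a::real_normed_vector \<Rightarrow> 'a) \<Rightarrow> 'a set \<Rightarrow> 'a \<Rightarrow> bool" where
  "lyapunov_stable F X p \<longleftrightarrow>
     (\<forall>e>0. \<exists>d>0. \<forall>x. ode_solution F x \<and> x 0 \<in> X \<and> dist (x 0) p < d \<longrightarrow>
        (\<forall>t\<ge>0. dist (x t) p < e))"

definition attractive :: "('a::real_normed_vector \<Rightarrow> 'a) \<Rightarrow> 'a set \<Rightarrow> 'a \<Rightarrow> bool" where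
  "attractive F X p \<longleftrightarrow>
     (\<exists>d>0. \<forall>x. ode_solution F x \<and> x 0 \<in> X \<and> dist (x 0) p < d \<longrightarrow> (x \<longlongrightarrow> p) at_top)"

text \<open>Stable equilibrium = (locally) asymptotically stable equilibrium, relative to the state space X.\<close>
definition stable_equilibrium :: "('a::real_normed_vector \<Rightarrow> 'a) \<Rightarrow> 'a set \<Rightarrow> 'a \<Rightarrow> bool" where
  "stable_equilibrium F X p \<longleftrightarrow> equilibrium F X p \<and> lyapunov_stable F X p \<and> attractive F X p"

definition infection_edges :: "real ^ 'n ^ 'n \<Rightarrow> ('n \<times> 'n) set" where
  "infection_edges B = {(j, i). B $ i $ j > 0}"

definition weakly_connected :: "('n \<times> 'n) set \<Rightarrow> bool" where
  "weakly_connected E \<longleftrightarrow> (\<forall>u v. (u, v) \<in> (E \<union> E\<inverse>)\<^sup>*)"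

definition strongly_connected :: "('n \<times> 'n) set \<Rightarrow> bool" where
  "strongly_connected E \<longleftrightarrow> (\<forall>u v. (u, v) \<in> E\<^sup>*)"

end

theory Submission
  imports Defs
begin

locale sis =
  fixes lam del cc :: "real^'n" and B :: "real^'n^'n"
  assumes lam: "\<And>i. lam$i \<ge> 0" and del: "\<And>i. del$i > 0"
    and Bnn: "\<And>i j. B$i$j \<ge> 0" and c_pos: "\<And>i. cc$i > 0" and c_le: "\<And>i. cc$i \<le> 1"
begin

definition F :: "real^'n \<Rightarrow> real^'n" where
  "F p = (\<chi> i. (1 - p$i) * cc$i * (lam$i + (B *v p)$i) - del$i * p$i)"

definition Lc :: real where
  "Lc = 1 + (\<Sum>i\<in>UNIV. lam$i + del$i + (\<Sum>j\<in>UNIV. B$i$j))"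

definition G :: "real^'n \<Rightarrow> real^'n" where
  "G p = F p + Lc *\<^sub>R p"

definition cube :: "(real^'n) set" where
  "cube = {p. \<forall>i. 0 \<le> p$i \<and> p$i \<le> 1}"

lemma Bv: "(B *v p)$i = (\<Sum>j\<in>UNIV. B$i$j * p$j)"
  by (simp add: matrix_vector_mult_def)

lemma Bv_nonneg: "p \<in> cube \<Longrightarrow> 0 \<le> (B *v p)$i"
  unfolding Bv cube_def by (auto intro!: sum_nonneg mult_nonneg_nonneg Bnn)

lemma Bv_le: "p \<in> cube \<Longrightarrow> (B *v p)$i \<le> (\<Sum>j\<in>UNIV. B$i$j)"
  unfolding Bv cube_def
  by (auto intro!: sum_mono mult_left_le Bnn)

lemma Bv_mono: "p \<le> p' \<Longrightarrow> (B *v p)$i \<le> (B *v p')$i"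
  unfolding Bv less_eq_vec_def by (auto intro!: sum_mono mult_left_mono Bnn)

lemma rowsum_le: "lam$i + del$i + (\<Sum>j\<in>UNIV. B$i$j) \<le> Lc - 1"
proof -
  have "lam$i + del$i + (\<Sum>j\<in>UNIV. B$i$j) \<le> (\<Sum>i\<in>UNIV. lam$i + del$i + (\<Sum>j\<in>UNIV. B$i$j))"
    by (rule member_le_sum) (auto intro!: add_nonneg_nonneg sum_nonneg lam Bnn less_imp_le[OF del])
  then show ?thesis unfolding Lc_def by simp
qed

lemma Lc_pos: "Lc > 0"
  using rowsum_le[of undefined] lam[of undefined] del[of undefined]
    sum_nonneg[of UNIV "\<lambda>j. B$undefined$j"] Bnn by (smt (verit) sum_nonneg)

lemma G_comp: "G p $ i = (1 - p$i) * cc$i * (lam$i + (B *v p)$i) + (Lc - del$i) * p$i"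
  unfolding G_def F_def by (simp add: algebra_simps)

lemma G_mono:
  assumes "p \<in> cube" "p' \<in> cube" "p \<le> p'"
  shows "G p $ i \<le> G p' $ i"
proof -
  let ?A = "lam$i + (B *v p)$i" and ?A' = "lam$i + (B *v p')$i"
  have AA: "?A \<le> ?A'" using Bv_mono[OF assms(3)] by simp
  have A0: "0 \<le> ?A" using Bv_nonneg[OF assms(1)] lam[of i] by simp
  have Ab: "cc$i * ?A \<le> Lc - del$i"
  proof -
    have "cc$i * ?A \<le> ?A" using mult_left_le_one_le[OF A0 less_imp_le[OF c_pos[of i]] c_le[of i]] .
    also have "\<dots> \<le> Lc - del$i" using Bv_le[OF assms(1), of i] rowsum_le[of i] by simp
    finally show ?thesis .
  qed
  have p1: "p'$i \<le> 1" "p$i \<le> p'$i" using assms unfolding cube_def less_eq_vec_def by auto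
  have "G p' $ i - G p $ i = (1 - p'$i) * cc$i * (?A' - ?A) + (p'$i - p$i) * (Lc - del$i - cc$i * ?A)"
    unfolding G_comp by (simp add: algebra_simps)
  also have "\<dots> \<ge> 0"
    using p1 AA Ab c_pos[of i] by (intro add_nonneg_nonneg mult_nonneg_nonneg) auto
  finally show ?thesis by simp
qed

end

context sis begin

lemma F_cont: "continuous_on S F"
  unfolding F_def Bv by (intro continuous_on_vec_lambda continuous_intros)

lemma G_cont: "continuous_on S G"
  unfolding G_def by (intro continuous_intros F_cont)

lemma F_one: "F 1 $ i = - del$i"
  unfolding F_def by simp

lemma exp_int:
  assumes "t \<ge> 0"
  shows "integral {0..t} (\<lambda>s. exp (Lc * s)) = (exp (Lc * t) - 1) / Lc"
proof -
  have "((\<lambda>s. exp (Lc * s)) has_integral (exp (Lc * t)/Lc - exp (Lc * 0)/Lc)) {0..t}"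
    apply (rule fundamental_theorem_of_calculus)
    using assms Lc_pos
    by (auto intro!: derivative_eq_intros simp: has_real_derivative_iff_has_vector_derivative[symmetric])
  then show ?thesis using Lc_pos by (simp add: integral_unique diff_divide_distrib)
qed

definition Tm :: "real^'n \<Rightarrow> (real \<Rightarrow> real^'n) \<Rightarrow> real \<Rightarrow> real^'n" where
  "Tm x0 x t = (\<chi> i. exp (- Lc * t) * (x0$i + integral {0..t} (\<lambda>s. exp (Lc * s) * G (x s) $ i)))"

lemma integrand_cont:
  assumes "continuous_on {0..t} x"
  shows "continuous_on {0..t} (\<lambda>s. exp (Lc * s) * G (x s) $ i)"
  by (intro continuous_intros continuous_on_compose2[OF G_cont assms]) auto

lemma T_zero: "Tm x0 x 0 = x0"
  unfolding Tm_def by (simp add: vec_eq_iff)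

lemma T_bounds:
  assumes a: "a \<in> cube" "0 \<le> F a" "a \<le> x0" and x0: "x0 \<in> cube"
    and xc: "continuous_on {0..t} x" and xs: "\<And>s. s \<in> {0..t} \<Longrightarrow> x s \<in> cube \<and> a \<le> x s"
    and t: "t \<ge> 0"
  shows "Tm x0 x t \<in> cube \<and> a \<le> Tm x0 x t"
proof -
  have *: "a$i \<le> Tm x0 x t $ i \<and> Tm x0 x t $ i \<le> 1" for i
  proof -
    let ?I = "integral {0..t} (\<lambda>s. exp (Lc * s) * G (x s) $ i)"
    let ?E = "exp (Lc * t)"
    have int1: "(\<lambda>s. exp (Lc * s) * G (x s) $ i) integrable_on {0..t}"
      by (rule integrable_continuous_real[OF integrand_cont[OF xc]])
    have int2: "(\<lambda>s. exp (Lc * s) * c) integrable_on {0..t}" for c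
      by (intro integrable_continuous_real continuous_intros)
    have ie: "integral {0..t} (\<lambda>s. exp (Lc * s) * c) = (?E - 1) / Lc * c" for c
      using exp_int[OF t] by (simp add: integral_mult_left)
    have lo: "exp (Lc * s) * (Lc * a$i) \<le> exp (Lc * s) * G (x s) $ i" if "s \<in> {0..t}" for s
    proof -
      have "G a $ i \<le> G (x s) $ i" using G_mono[OF a(1)] xs[OF that] by auto
      moreover have "Lc * a$i \<le> G a $ i" using a(2) unfolding G_def less_eq_vec_def by simp
      ultimately show ?thesis by simp
    qed
    have hi: "exp (Lc * s) * G (x s) $ i \<le> exp (Lc * s) * Lc" if "s \<in> {0..t}" for s
    proof -
      have "G (x s) $ i \<le> G 1 $ i" using G_mono[of "x s" 1] xs[OF that] by (auto simp: cube_def less_eq_vec_def)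
      moreover have "G 1 $ i \<le> Lc" unfolding G_def using F_one[of i] del[of i] by simp
      ultimately show ?thesis by simp
    qed
    have ie1: "integral {0..t} (\<lambda>s. exp (Lc * s) * (Lc * a$i)) = (?E - 1) * a$i"
      using ie[of "Lc * a$i"] Lc_pos by simp
    have I1: "(?E - 1) * a$i \<le> ?I"
      using integral_le[OF int2 int1 lo] unfolding ie1 .
    have I2: "?I \<le> ?E - 1"
      using integral_le[OF int1 int2 hi] ie[of Lc] Lc_pos by simp
    have ax: "a$i \<le> x0$i" "x0$i \<le> 1" using a(3) x0 by (auto simp: less_eq_vec_def cube_def)
    have Epos: "?E > 0" by simp
    have "a$i \<le> exp (-Lc * t) * (x0$i + ?I)"
    proof -
      have "?E * a$i \<le> x0$i + ?I" using I1 ax by (simp add: algebra_simps)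
      then have "exp (-Lc * t) * (?E * a$i) \<le> exp (-Lc * t) * (x0$i + ?I)" by (simp add: mult_left_mono)
      then show ?thesis by (simp add: exp_minus_inverse mult.assoc[symmetric] exp_add[symmetric])
    qed
    moreover have "exp (-Lc * t) * (x0$i + ?I) \<le> 1"
    proof -
      have "x0$i + ?I \<le> ?E" using I2 ax by simp
      then have "exp (-Lc * t) * (x0$i + ?I) \<le> exp (-Lc * t) * ?E" by (simp add: mult_left_mono)
      then show ?thesis by (simp add: exp_add[symmetric])
    qed
    ultimately show ?thesis unfolding Tm_def by simp
  qed
  have "0 \<le> a$i" for i using a(1) by (auto simp: cube_def)
  then show ?thesis using * unfolding cube_def less_eq_vec_def by (force intro: order_trans)
qed

lemma T_mono:
  assumes "x0 \<le> y0" and xc: "continuous_on {0..t} x" and yc: "continuous_on {0..t} y"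
    and xs: "\<And>s. s \<in> {0..t} \<Longrightarrow> x s \<in> cube \<and> y s \<in> cube \<and> x s \<le> y s"
  shows "Tm x0 x t \<le> Tm y0 y t"
  unfolding less_eq_vec_def
proof
  fix i
  have "integral {0..t} (\<lambda>s. exp (Lc * s) * G (x s) $ i) \<le> integral {0..t} (\<lambda>s. exp (Lc * s) * G (y s) $ i)"
    by (intro integral_le integrable_continuous_real integrand_cont xc yc mult_left_mono)
      (use xs G_mono in auto)
  then show "Tm x0 x t $ i \<le> Tm y0 y t $ i"
    unfolding Tm_def using assms(1) by (auto simp: less_eq_vec_def intro!: mult_left_mono add_mono)
qed

lemma T_cont:
  assumes xc: "continuous_on {0..t} x"
  shows "continuous_on {0..t} (Tm x0 x)"
  unfolding Tm_def
  by (intro continuous_on_vec_lambda continuous_intros indefinite_integral_continuous_1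
      integrable_continuous_real integrand_cont xc)

end

lemma vec_deriv:
  fixes f :: "real \<Rightarrow> real^'n"
  assumes "\<And>i. ((\<lambda>t. f t $ i) has_real_derivative v $ i) (at t within S)"
  shows "(f has_vector_derivative v) (at t within S)"
  unfolding has_vector_derivative_def
proof (subst has_derivative_componentwise_within, intro ballI)
  fix b :: "real^'n" assume "b \<in> Basis"
  then obtain i where b: "b = axis i 1" unfolding Basis_vec_def by auto
  have "((\<lambda>t. f t $ i) has_derivative (\<lambda>h. v $ i * h)) (at t within S)"
    using assms[of i] unfolding has_field_derivative_def by simp
  then show "((\<lambda>x. f x \<bullet> b) has_derivative (\<lambda>x. x *\<^sub>R v \<bullet> b)) (at t within S)"
    unfolding b by (simp add: cart_eq_inner_axis[symmetric] mult.commute)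
qed

lemma deriv_within_extend:
  fixes f :: "real \<Rightarrow> 'a::real_normed_vector"
  assumes "(f has_vector_derivative v) (at t within {0..T})" "t < T"
  shows "(f has_vector_derivative v) (at t within {0..})"
proof -
  have "at t within {0..T} = at t within {0..}"
    by (rule at_within_nhd[where S="{..<T}"]) (use assms(2) in auto)
  then show ?thesis using assms(1) by simp
qed

context sis begin

primrec iter :: "real^'n \<Rightarrow> real^'n \<Rightarrow> nat \<Rightarrow> real \<Rightarrow> real^'n" where
  "iter a x0 0 = (\<lambda>t. a)"
| "iter a x0 (Suc k) = Tm x0 (iter a x0 k)"

lemma iter_cont: "continuous_on {0..t} (iter a x0 k)"
  by (induction k arbitrary: t) (auto intro: T_cont)

definition "good a x0 \<longleftrightarrow> a \<in> cube \<and> 0 \<le> F a \<and> a \<le> x0 \<and> x0 \<in> cube"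

lemma iter_cube:
  assumes "good a x0" "s \<ge> 0"
  shows "iter a x0 k s \<in> cube \<and> a \<le> iter a x0 k s"
  using assms(2)
proof (induction k arbitrary: s)
  case 0 then show ?case using assms(1) by (simp add: good_def)
next
  case (Suc k)
  show ?case
    using T_bounds[of a x0 s "iter a x0 k"] assms(1) Suc iter_cont
    by (auto simp: good_def)
qed

lemma iter_mono:
  assumes "good a x0" "s \<ge> 0"
  shows "iter a x0 k s \<le> iter a x0 (Suc k) s"
  using assms(2)
proof (induction k arbitrary: s)
  case 0 then show ?case using assms(1) T_bounds[of a x0 s "\<lambda>_. a"] by (auto simp: good_def)
next
  case (Suc k)
  have "Tm x0 (iter a x0 k) s \<le> Tm x0 (iter a x0 (Suc k)) s"
    by (rule T_mono) (use Suc iter_cont iter_cube[OF assms(1)] in \<open>auto simp del: iter.simps\<close>)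
  then show ?case by simp
qed

definition Xl :: "real^'n \<Rightarrow> real^'n \<Rightarrow> real \<Rightarrow> real^'n" where
  "Xl a x0 t = (\<chi> i. SUP k. iter a x0 k t $ i)"

lemma iter_bdd: "good a x0 \<Longrightarrow> t \<ge> 0 \<Longrightarrow> bdd_above (range (\<lambda>k. iter a x0 k t $ i))"
  using iter_cube unfolding cube_def by (auto intro!: bdd_aboveI[of _ 1])

lemma iter_inc: "good a x0 \<Longrightarrow> t \<ge> 0 \<Longrightarrow> incseq (\<lambda>k. iter a x0 k t $ i)"
  using iter_mono by (auto intro!: incseq_SucI simp: less_eq_vec_def simp del: iter.simps)

lemma Xl_lim_comp: "good a x0 \<Longrightarrow> t \<ge> 0 \<Longrightarrow> (\<lambda>k. iter a x0 k t $ i) \<longlonglongrightarrow> Xl a x0 t $ i"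
  unfolding Xl_def by (simp add: LIMSEQ_incseq_SUP iter_bdd iter_inc)

lemma Xl_lim: "good a x0 \<Longrightarrow> t \<ge> 0 \<Longrightarrow> (\<lambda>k. iter a x0 k t) \<longlonglongrightarrow> Xl a x0 t"
  by (intro vec_tendstoI Xl_lim_comp)

lemma Xl_ge: "good a x0 \<Longrightarrow> t \<ge> 0 \<Longrightarrow> iter a x0 k t \<le> Xl a x0 t"
  unfolding less_eq_vec_def Xl_def
  by (auto intro!: cSUP_upper iter_bdd)

lemma Xl_cube: "good a x0 \<Longrightarrow> t \<ge> 0 \<Longrightarrow> Xl a x0 t \<in> cube \<and> a \<le> Xl a x0 t"
proof -
  assume g: "good a x0" and t: "t \<ge> 0"
  have "Xl a x0 t $ i \<le> 1" for i
    unfolding Xl_def using iter_cube[OF g t] by (auto intro!: cSUP_least simp: cube_def)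
  moreover have "a \<le> Xl a x0 t"
    using Xl_ge[OF g t, of 0] by simp
  moreover have "0 \<le> a $ i" for i using g by (auto simp: good_def cube_def)
  ultimately show ?thesis unfolding cube_def less_eq_vec_def by (force intro: order_trans)
qed

end

context sis begin

lemma G_isCont: "isCont G x"
  using G_cont[of UNIV] continuous_on_eq_continuous_at[of UNIV G] by auto

lemma F_isCont: "isCont F x"
  using F_cont[of UNIV] continuous_on_eq_continuous_at[of UNIV F] by auto

lemma Xl_fix:
  assumes g: "good a x0" and t: "t \<ge> 0"
  shows "Xl a x0 t $ i = Tm x0 (Xl a x0) t $ i \<and>
         (\<lambda>s. exp (Lc * s) * G (Xl a x0 s) $ i) integrable_on {0..t}"
proof -
  define f where "f = (\<lambda>k s. exp (Lc * s) * G (iter a x0 k s) $ i)"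
  define h where "h = (\<lambda>s. exp (Lc * s) * G (Xl a x0 s) $ i)"
  have int_f: "f k integrable_on {0..t}" for k
    unfolding f_def by (rule integrable_continuous_real[OF integrand_cont[OF iter_cont]])
  have mono: "f k s \<le> f (Suc k) s" if "s \<in> {0..t}" for k s
    unfolding f_def using that iter_cube[OF g] iter_mono[OF g]
    by (intro mult_left_mono G_mono) (auto simp del: iter.simps)
  have lim: "(\<lambda>k. f k s) \<longlonglongrightarrow> h s" if "s \<in> {0..t}" for s
    unfolding f_def h_def using that
    by (intro tendsto_mult_left tendsto_vec_nth isCont_tendsto_compose[OF G_isCont] Xl_lim[OF g]) auto
  have ieq: "integral {0..t} (f k) = exp (Lc * t) * iter a x0 (Suc k) t $ i - x0 $ i" for k
    by (simp add: Tm_def f_def mult.assoc[symmetric] exp_add[symmetric])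
  have bnd: "bounded (range (\<lambda>k. integral {0..t} (f k)))"
    unfolding bounded_iff
  proof (intro exI ballI)
    fix y assume "y \<in> range (\<lambda>k. integral {0..t} (f k))"
    then obtain k where y: "y = integral {0..t} (f k)" by auto
    have "iter a x0 (Suc k) t \<in> cube" using iter_cube[OF g t] by blast
    then have "0 \<le> iter a x0 (Suc k) t $ i" "iter a x0 (Suc k) t $ i \<le> 1" by (auto simp: cube_def)
    moreover have "0 \<le> x0$i" "x0$i \<le> 1" using g by (auto simp: good_def cube_def)
    moreover have "exp (Lc * t) * iter a x0 (Suc k) t $ i \<le> exp (Lc * t)"
      using calculation by (simp add: mult_left_le)
    moreover have "0 \<le> exp (Lc * t) * iter a x0 (Suc k) t $ i"
      using calculation by simp
    ultimately show "norm y \<le> exp (Lc * t) + 1" unfolding y ieq real_norm_def abs_le_iff by linarith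
  qed
  from monotone_convergence_increasing[OF int_f mono lim bnd]
  have hi: "h integrable_on {0..t}" and conv: "(\<lambda>k. integral {0..t} (f k)) \<longlonglongrightarrow> integral {0..t} h"
    by auto
  have "(\<lambda>k. iter a x0 (Suc k) t $ i) \<longlonglongrightarrow> exp (- Lc * t) * (x0$i + integral {0..t} h)"
  proof -
    have "(\<lambda>k. iter a x0 (Suc k) t $ i) = (\<lambda>k. exp (- Lc * t) * (x0$i + integral {0..t} (f k)))"
      by (simp add: Tm_def f_def fun_eq_iff)
    then show ?thesis by (simp only:) (intro tendsto_intros conv)
  qed
  moreover have "(\<lambda>k. iter a x0 (Suc k) t $ i) \<longlonglongrightarrow> Xl a x0 t $ i"
    using Xl_lim_comp[OF g t] by (rule LIMSEQ_Suc)
  ultimately have "Xl a x0 t $ i = exp (- Lc * t) * (x0$i + integral {0..t} h)"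
    using LIMSEQ_unique by blast
  then show ?thesis using hi unfolding h_def Tm_def by simp
qed

lemma Xl_cont:
  assumes g: "good a x0"
  shows "continuous_on {0..T} (Xl a x0)"
proof (cases "T \<ge> 0")
  case True
  have "continuous_on {0..T} (Tm x0 (Xl a x0))"
    unfolding Tm_def
    by (intro continuous_on_vec_lambda continuous_intros indefinite_integral_continuous_1
        conjunct2[OF Xl_fix[OF g True]])
  moreover have "Xl a x0 t = Tm x0 (Xl a x0) t" if "t \<in> {0..T}" for t
    using Xl_fix[OF g] that by (auto simp: vec_eq_iff)
  ultimately show ?thesis using continuous_on_cong by (metis (no_types, lifting))
next
  case False then show ?thesis by simp
qed

lemma Xl_deriv:
  assumes g: "good a x0" and t: "t \<ge> 0"
  shows "(Xl a x0 has_vector_derivative F (Xl a x0 t)) (at t within {0..})"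
proof (rule deriv_within_extend[where T="t+1"], rule vec_deriv)
  fix i
  define h where "h = (\<lambda>s. exp (Lc * s) * G (Xl a x0 s) $ i)"
  have hc: "continuous_on {0..t+1} h"
    unfolding h_def by (rule integrand_cont[OF Xl_cont[OF g]])
  have dI: "((\<lambda>u. integral {0..u} h) has_real_derivative h t) (at t within {0..t+1})"
    unfolding has_real_derivative_iff_has_vector_derivative
    by (rule integral_has_vector_derivative[OF hc]) (use t in auto)
  have d1: "((\<lambda>u. exp (- Lc * u) * (x0$i + integral {0..u} h)) has_real_derivative
      (- Lc * exp (- Lc * t) * (x0$i + integral {0..t} h) + exp (- Lc * t) * h t)) (at t within {0..t+1})"
    by (rule derivative_eq_intros refl dI | simp)+
  have eq: "Xl a x0 u $ i = exp (- Lc * u) * (x0$i + integral {0..u} h)" if "u \<in> {0..t+1}" for u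
    using Xl_fix[OF g, of u i] that unfolding Tm_def h_def by simp
  have val: "- Lc * exp (- Lc * t) * (x0$i + integral {0..t} h) + exp (- Lc * t) * h t = F (Xl a x0 t) $ i"
  proof -
    have A: "exp (- Lc * t) * h t = G (Xl a x0 t) $ i"
      unfolding h_def by (simp add: mult.assoc[symmetric] exp_add[symmetric])
    have B: "- Lc * exp (- Lc * t) * (x0$i + integral {0..t} h) = - Lc * Xl a x0 t $ i"
      by (subst eq[of t]) (use t in auto)
    have C: "G (Xl a x0 t) $ i = F (Xl a x0 t) $ i + Lc * Xl a x0 t $ i" by (simp add: G_def)
    show ?thesis using A B C by linarith
  qed
  show "((\<lambda>u. Xl a x0 u $ i) has_real_derivative F (Xl a x0 t) $ i) (at t within {0..t+1})"
    using has_field_derivative_transform_within[OF d1[unfolded val], where d=1 and g="\<lambda>u. Xl a x0 u $ i"] eq t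
    by auto
qed simp

end

lemma gron_step:
  fixes x y :: "real \<Rightarrow> 'a::real_normed_vector"
  assumes ab: "a \<le> b" and bl: "(b - a) * L \<le> 1/2" and L: "L \<ge> 0"
    and dx: "\<And>t. t \<in> {a..b} \<Longrightarrow> (x has_vector_derivative f t) (at t within {a..b})"
    and dy: "\<And>t. t \<in> {a..b} \<Longrightarrow> (y has_vector_derivative g t) (at t within {a..b})"
    and lip: "\<And>t. t \<in> {a..b} \<Longrightarrow> norm (f t - g t) \<le> L * norm (x t - y t)"
  shows "\<And>t. t \<in> {a..b} \<Longrightarrow> norm (x t - y t) \<le> 2 * norm (x a - y a)"
proof -
  define w where "w = (\<lambda>t. x t - y t)"
  have dw: "(w has_vector_derivative (f t - g t)) (at t within {a..b})" if "t \<in> {a..b}" for t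
    unfolding w_def using dx[OF that] dy[OF that] by (rule has_vector_derivative_diff)
  have cw: "continuous_on {a..b} w"
    using dw has_vector_derivative_continuous continuous_on_eq_continuous_within by blast
  then have "continuous_on {a..b} (\<lambda>t. norm (w t))" by (intro continuous_intros)
  then obtain m where m: "m \<in> {a..b}" "\<And>t. t \<in> {a..b} \<Longrightarrow> norm (w t) \<le> norm (w m)"
    using continuous_attains_sup[of "{a..b}" "\<lambda>t. norm (w t)"] ab by auto
  define M where "M = norm (w m)"
  have M0: "M \<ge> 0" unfolding M_def by simp
  have key: "norm (w t) \<le> norm (w a) + M / 2" if t: "t \<in> {a..b}" for t
  proof -
    have "norm (w t - w a) \<le> (L * M) * norm (t - a)"
    proof (rule differentiable_bound[where S="{a..t}" and f'="\<lambda>s h. h *\<^sub>R (f s - g s)"])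
      show "convex {a..t}" by simp
      show "(w has_derivative (\<lambda>h. h *\<^sub>R (f s - g s))) (at s within {a..t})" if "s \<in> {a..t}" for s
        using has_vector_derivative_within_subset[OF dw, of s "{a..t}"] that t
        unfolding has_vector_derivative_def by auto
      show "onorm (\<lambda>h. h *\<^sub>R (f s - g s)) \<le> L * M" if "s \<in> {a..t}" for s
      proof -
        have s: "s \<in> {a..b}" using that t by auto
        have "onorm (\<lambda>h. h *\<^sub>R (f s - g s)) = norm (f s - g s)"
          using onorm_scaleR_left[of "\<lambda>h::real. h" "f s - g s"] onorm_id[where 'a=real] by (simp add: bounded_linear_ident)
        also have "\<dots> \<le> L * norm (w s)" using lip[OF s] unfolding w_def .
        also have "\<dots> \<le> L * M" unfolding M_def using m(2)[OF s] L by (simp add: mult_left_mono)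
        finally show ?thesis .
      qed
    qed (use t in auto)
    also have "\<dots> = M * ((t - a) * L)" using t by (simp add: algebra_simps)
    also have "\<dots> \<le> M * (1/2)"
    proof -
      have "(t - a) * L \<le> (b - a) * L" using t L by (simp add: mult_right_mono)
      then show ?thesis using bl M0 by (intro mult_left_mono) auto
    qed
    finally have "norm (w t - w a) \<le> M / 2" by simp
    then show ?thesis using norm_triangle_ineq2[of "w t" "w a"] by simp
  qed
  have "M \<le> 2 * norm (w a)" using key[OF m(1)] unfolding M_def by simp
  then show "\<And>t. t \<in> {a..b} \<Longrightarrow> norm (x t - y t) \<le> 2 * norm (x a - y a)"
    using m(2) unfolding M_def w_def by (meson order_trans)
qed

lemma gron:
  fixes x y :: "real \<Rightarrow> 'a::real_normed_vector"
  assumes L: "L > 0" and T: "T \<ge> 0"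
    and dx: "\<And>t. t \<in> {0..T} \<Longrightarrow> (x has_vector_derivative f t) (at t within {0..T})"
    and dy: "\<And>t. t \<in> {0..T} \<Longrightarrow> (y has_vector_derivative g t) (at t within {0..T})"
    and lip: "\<And>t. t \<in> {0..T} \<Longrightarrow> norm (f t - g t) \<le> L * norm (x t - y t)"
  shows "\<And>t. t \<in> {0..T} \<Longrightarrow> norm (x t - y t) \<le> 2 ^ nat \<lceil>2 * L * T\<rceil> * norm (x 0 - y 0)"
proof -
  define h where "h = 1 / (2 * L)"
  have h: "h > 0" "h * L = 1/2" using L unfolding h_def by auto
  have claim: "\<forall>t\<in>{0..min T (real k * h)}. norm (x t - y t) \<le> 2 ^ k * norm (x 0 - y 0)" for k
  proof (induction k)
    case 0 then show ?case by auto
  next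
    case (Suc k)
    show ?case
    proof
      fix t assume t: "t \<in> {0..min T (real (Suc k) * h)}"
      show "norm (x t - y t) \<le> 2 ^ Suc k * norm (x 0 - y 0)"
      proof (cases "t \<le> min T (real k * h)")
        case True
        then have "norm (x t - y t) \<le> 2 ^ k * norm (x 0 - y 0)" using Suc t by auto
        also have "\<dots> \<le> 2 ^ Suc k * norm (x 0 - y 0)" by (intro mult_right_mono) auto
        finally show ?thesis .
      next
        case False
        define a where "a = min T (real k * h)"
        define b where "b = min T (real (Suc k) * h)"
        have kh: "real k * h \<le> real (Suc k) * h" "0 \<le> real k * h" using h by (auto intro: mult_right_mono)
        have ab: "a \<le> b" "0 \<le> a" "b \<le> T" unfolding a_def b_def using kh T by (auto simp: min_def)
        have tab: "t \<in> {a..b}" using t False unfolding a_def b_def by auto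
        have bl: "(b - a) * L \<le> 1/2"
        proof -
          have "b - a \<le> h" unfolding a_def b_def using h by (auto simp: min_def algebra_simps)
          then have "(b - a) * L \<le> h * L" using L by (simp add: mult_right_mono)
          then show ?thesis using h by simp
        qed
        have sub: "{a..b} \<subseteq> {0..T}" using ab by auto
        have dx': "(x has_vector_derivative f s) (at s within {a..b})" if "s \<in> {a..b}" for s
          using dx[of s] sub that has_vector_derivative_within_subset by blast
        have dy': "(y has_vector_derivative g s) (at s within {a..b})" if "s \<in> {a..b}" for s
          using dy[of s] sub that has_vector_derivative_within_subset by blast
        have "norm (x t - y t) \<le> 2 * norm (x a - y a)"
          by (rule gron_step[OF ab(1) bl less_imp_le[OF L], of x f y g, OF dx' dy'])
            (use lip sub tab in auto)
        also have "\<dots> \<le> 2 * (2 ^ k * norm (x 0 - y 0))"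
          using Suc ab unfolding a_def by auto
        finally show ?thesis by simp
      qed
    qed
  qed
  fix t assume t: "t \<in> {0..T}"
  define K where "K = nat \<lceil>2 * L * T\<rceil>"
  have "T \<le> real K * h"
  proof -
    have "2 * L * T \<le> real K" unfolding K_def by linarith
    then have "2 * L * T * h \<le> real K * h" using h by (simp add: mult_right_mono)
    moreover have "2 * L * T * h = T" using h by (simp add: algebra_simps)
    ultimately show ?thesis by simp
  qed
  then show "norm (x t - y t) \<le> 2 ^ nat \<lceil>2 * L * T\<rceil> * norm (x 0 - y 0)"
    using claim[of K] t unfolding K_def by auto
qed

context sis begin

lemma Bv_abs: "\<bar>(B *v v)$i\<bar> \<le> (\<Sum>j\<in>UNIV. B$i$j) * norm v"
proof -
  have "\<bar>(B *v v)$i\<bar> \<le> (\<Sum>j\<in>UNIV. \<bar>B$i$j * v$j\<bar>)" unfolding Bv by (rule sum_abs)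
  also have "\<dots> \<le> (\<Sum>j\<in>UNIV. B$i$j * norm v)"
    by (intro sum_mono) (simp add: abs_mult Bnn abs_of_nonneg mult_left_mono component_le_norm_cart)
  finally show ?thesis by (simp add: sum_distrib_right)
qed

lemma F_comp_diff: "F p $ i - F p' $ i = cc$i * ((1 - p$i) * (B *v (p - p'))$i
    + (p'$i - p$i) * (lam$i + (B *v p')$i)) - del$i * (p$i - p'$i)"
  by (simp add: F_def matrix_vector_mult_diff_distrib algebra_simps)

lemma F_lip:
  assumes p: "norm p \<le> R" and p': "norm p' \<le> R"
  shows "norm (F p - F p') \<le> real CARD('n) * (Lc * (1 + 2*R)) * norm (p - p')"
proof -
  define nd where "nd = norm (p - p')"
  have R0: "R \<ge> 0" using p norm_ge_zero order_trans by blast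
  have comp: "\<bar>F p $ i - F p' $ i\<bar> \<le> Lc * (1 + 2*R) * nd" for i
  proof -
    define \<beta> where "\<beta> = (\<Sum>j\<in>UNIV. B$i$j)"
    have b0: "\<beta> \<ge> 0" unfolding \<beta>_def by (auto intro: sum_nonneg Bnn)
    have h1: "\<bar>(B *v (p - p'))$i\<bar> \<le> \<beta> * nd" unfolding \<beta>_def nd_def by (rule Bv_abs)
    have h2: "\<bar>1 - p$i\<bar> \<le> 1 + R" using component_le_norm_cart[of p i] p by linarith
    have h3: "\<bar>p'$i - p$i\<bar> \<le> nd" "\<bar>p$i - p'$i\<bar> \<le> nd"
      unfolding nd_def using component_le_norm_cart[of "p - p'" i]
      by (auto simp: abs_minus_commute)
    have h4: "\<bar>lam$i + (B *v p')$i\<bar> \<le> lam$i + \<beta> * R"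
    proof -
      have "\<bar>(B *v p')$i\<bar> \<le> \<beta> * R"
        using Bv_abs[of p' i] mult_left_mono[OF p' b0] unfolding \<beta>_def by linarith
      then show ?thesis using lam[of i] by linarith
    qed
    define X where "X = (1 - p$i) * (B *v (p - p'))$i + (p'$i - p$i) * (lam$i + (B *v p')$i)"
    have hX: "\<bar>X\<bar> \<le> (1 + R) * (\<beta> * nd) + nd * (lam$i + \<beta> * R)"
    proof -
      have "\<bar>X\<bar> \<le> \<bar>1 - p$i\<bar> * \<bar>(B *v (p - p'))$i\<bar> + \<bar>p'$i - p$i\<bar> * \<bar>lam$i + (B *v p')$i\<bar>"
        unfolding X_def using abs_triangle_ineq[of "(1 - p$i) * (B *v (p - p'))$i" "(p'$i - p$i) * (lam$i + (B *v p')$i)"]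
        by (simp only: abs_mult)
      also have "\<dots> \<le> (1 + R) * (\<beta> * nd) + nd * (lam$i + \<beta> * R)"
        by (intro add_mono mult_mono h1 h2 h3 h4) (use R0 in \<open>auto simp: nd_def\<close>)
      finally show ?thesis .
    qed
    have hc: "\<bar>cc$i * X\<bar> \<le> \<bar>X\<bar>"
      using c_pos[of i] c_le[of i] by (simp add: abs_mult mult_left_le_one_le)
    have hd: "\<bar>del$i * (p$i - p'$i)\<bar> \<le> del$i * nd"
      using del[of i] h3(2) by (simp add: abs_mult mult_left_mono)
    have "\<bar>F p $ i - F p' $ i\<bar> \<le> \<bar>cc$i * X\<bar> + \<bar>del$i * (p$i - p'$i)\<bar>"
      unfolding F_comp_diff X_def by (rule abs_triangle_ineq4)
    also have "\<dots> \<le> (1 + R) * (\<beta> * nd) + nd * (lam$i + \<beta> * R) + del$i * nd"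
      using hc hX hd by linarith
    also have "\<dots> \<le> (lam$i + del$i + \<beta>) * (1 + 2*R) * nd"
    proof -
      have n0: "nd \<ge> 0" unfolding nd_def by simp
      have "0 \<le> nd * (R * (2 * lam$i + 2 * del$i))"
        using n0 R0 lam[of i] del[of i] by (intro mult_nonneg_nonneg) auto
      then show ?thesis by (simp add: algebra_simps)
    qed
    also have "\<dots> \<le> Lc * (1 + 2*R) * nd"
      using rowsum_le[of i] R0 unfolding \<beta>_def nd_def
      by (intro mult_right_mono) auto
    finally show ?thesis .
  qed
  have "norm (F p - F p') \<le> (\<Sum>i\<in>UNIV. \<bar>(F p - F p') $ i\<bar>)" by (rule norm_le_l1_cart)
  also have "\<dots> \<le> real CARD('n) * (Lc * (1 + 2*R) * nd)"
    using sum_bounded_above[of UNIV "\<lambda>i. \<bar>(F p - F p') $ i\<bar>" "Lc * (1 + 2*R) * nd"] comp by simp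
  finally show ?thesis unfolding nd_def by (simp add: mult.assoc)
qed

lemma sol_cont: "ode_solution F x \<Longrightarrow> continuous_on {0..T} x"
  unfolding continuous_on_eq_continuous_within
proof
  fix t assume x: "ode_solution F x" and t: "t \<in> {0..T}"
  then have "(x has_vector_derivative F (x t)) (at t within {0..})" unfolding ode_solution_def by auto
  then have "continuous (at t within {0..}) x" by (rule has_vector_derivative_continuous)
  then show "continuous (at t within {0..T}) x" by (rule continuous_within_subset) auto
qed

lemma sol_deriv_T: "ode_solution F x \<Longrightarrow> t \<in> {0..T} \<Longrightarrow>
    (x has_vector_derivative F (x t)) (at t within {0..T})"
  unfolding ode_solution_def
  by (rule has_vector_derivative_within_subset[of _ _ _ "{0..}"]) auto

lemma ode_unique:
  assumes x: "ode_solution F x" and y: "ode_solution F y" and x0: "x 0 = y 0" and t: "t \<ge> 0"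
  shows "x t = y t"
proof -
  have "bounded (x ` {0..t})" "bounded (y ` {0..t})"
    by (intro compact_imp_bounded compact_continuous_image sol_cont x y compact_Icc)+
  then obtain Rx Ry where Rx: "\<And>s. s \<in> {0..t} \<Longrightarrow> norm (x s) \<le> Rx"
    and Ry: "\<And>s. s \<in> {0..t} \<Longrightarrow> norm (y s) \<le> Ry"
    unfolding bounded_iff by (meson imageI)
  define R where "R = max 0 (max Rx Ry)"
  have R0: "R \<ge> 0" unfolding R_def by simp
  define L where "L = real CARD('n) * (Lc * (1 + 2*R)) + 1"
  have L0: "L > 0" unfolding L_def using Lc_pos R0 by (simp add: add_pos_nonneg)
  have "norm (x t - y t) \<le> 2 ^ nat \<lceil>2 * L * t\<rceil> * norm (x 0 - y 0)"
  proof (rule gron[OF L0 t, of x "\<lambda>s. F (x s)" y "\<lambda>s. F (y s)"])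
    show "(x has_vector_derivative F (x s)) (at s within {0..t})" if "s \<in> {0..t}" for s
      by (rule sol_deriv_T[OF x that])
    show "(y has_vector_derivative F (y s)) (at s within {0..t})" if "s \<in> {0..t}" for s
      by (rule sol_deriv_T[OF y that])
    show "norm (F (x s) - F (y s)) \<le> L * norm (x s - y s)" if s: "s \<in> {0..t}" for s
    proof -
      have "norm (x s) \<le> R" "norm (y s) \<le> R" using Rx[OF s] Ry[OF s] unfolding R_def by auto
      then have "norm (F (x s) - F (y s)) \<le> real CARD('n) * (Lc * (1 + 2*R)) * norm (x s - y s)"
        by (rule F_lip)
      also have "\<dots> \<le> L * norm (x s - y s)" unfolding L_def by (simp add: mult_right_mono)
      finally show ?thesis .
    qed
  qed (use t in auto)
  then show ?thesis using x0 by simp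
qed

lemma cube_norm: "p \<in> cube \<Longrightarrow> norm p \<le> real CARD('n)"
proof -
  assume p: "p \<in> cube"
  have "norm p \<le> (\<Sum>i\<in>UNIV. \<bar>p$i\<bar>)" by (rule norm_le_l1_cart)
  also have "\<dots> \<le> real CARD('n) * 1"
    using sum_bounded_above[of UNIV "\<lambda>i. \<bar>p$i\<bar>" 1] p by (auto simp: cube_def)
  finally show ?thesis by simp
qed

definition "Lq = real CARD('n) * (Lc * (1 + 2 * real CARD('n))) + 1"

lemma ode_dep:
  assumes x: "ode_solution F x" and y: "ode_solution F y"
    and cx: "\<And>s. s \<ge> 0 \<Longrightarrow> x s \<in> cube" and cy: "\<And>s. s \<ge> 0 \<Longrightarrow> y s \<in> cube"
    and t: "0 \<le> t" "t \<le> T"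
  shows "norm (x t - y t) \<le> 2 ^ nat \<lceil>2 * Lq * T\<rceil> * norm (x 0 - y 0)"
proof (rule gron[where f="\<lambda>s. F (x s)" and g="\<lambda>s. F (y s)"])
  show "0 < Lq" unfolding Lq_def using Lc_pos by (simp add: add_pos_nonneg)
  show "(x has_vector_derivative F (x s)) (at s within {0..T})" if "s \<in> {0..T}" for s
    by (rule sol_deriv_T[OF x that])
  show "(y has_vector_derivative F (y s)) (at s within {0..T})" if "s \<in> {0..T}" for s
    by (rule sol_deriv_T[OF y that])
  show "norm (F (x s) - F (y s)) \<le> Lq * norm (x s - y s)" if s: "s \<in> {0..T}" for s
  proof -
    have "norm (F (x s) - F (y s)) \<le> real CARD('n) * (Lc * (1 + 2 * real CARD('n))) * norm (x s - y s)"
      using s cx cy cube_norm by (intro F_lip) auto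
    also have "\<dots> \<le> Lq * norm (x s - y s)" unfolding Lq_def by (simp add: mult_right_mono)
    finally show ?thesis .
  qed
qed (use t in auto)

end

context sis begin

lemma F_zero: "0 \<le> F 0"
proof -
  have "0 \<le> cc$i * lam$i" for i using lam[of i] c_pos[of i] by simp
  then show ?thesis unfolding less_eq_vec_def F_def by simp
qed

lemma zero_cube: "0 \<in> cube" and one_cube: "1 \<in> cube"
  by (auto simp: cube_def)

lemma good0: "x0 \<in> cube \<Longrightarrow> good 0 x0"
  unfolding good_def using F_zero zero_cube by (auto simp: cube_def less_eq_vec_def)

lemma Xl_ode:
  assumes g: "good a x0"
  shows "ode_solution F (Xl a x0) \<and> Xl a x0 0 = x0"
proof
  show "ode_solution F (Xl a x0)" unfolding ode_solution_def using Xl_deriv[OF g] by auto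
  have "Xl a x0 0 $ i = x0 $ i" for i using Xl_fix[OF g, of 0 i] T_zero[of x0 "Xl a x0"] by simp
  then show "Xl a x0 0 = x0" by (simp add: vec_eq_iff)
qed

definition sol :: "real^'n \<Rightarrow> real \<Rightarrow> real^'n" where "sol x0 = Xl 0 x0"

lemma sol_ode: "x0 \<in> cube \<Longrightarrow> ode_solution F (sol x0)"
  and sol_0: "x0 \<in> cube \<Longrightarrow> sol x0 0 = x0"
  and sol_cube: "x0 \<in> cube \<Longrightarrow> t \<ge> 0 \<Longrightarrow> sol x0 t \<in> cube"
  unfolding sol_def using Xl_ode[OF good0] Xl_cube[OF good0] by auto

lemma any_sol: "ode_solution F x \<Longrightarrow> x 0 \<in> cube \<Longrightarrow> t \<ge> 0 \<Longrightarrow> x t = sol (x 0) t"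
  using ode_unique[of x "sol (x 0)" t] sol_ode sol_0 by auto

lemma any_sol_cube: "ode_solution F x \<Longrightarrow> x 0 \<in> cube \<Longrightarrow> t \<ge> 0 \<Longrightarrow> x t \<in> cube"
  using any_sol[of x t] sol_cube[of "x 0" t] by simp

lemma sol_lower:
  assumes "a \<in> cube" "0 \<le> F a" "a \<le> x0" "x0 \<in> cube" "t \<ge> 0"
  shows "a \<le> sol x0 t"
proof -
  have g: "good a x0" using assms unfolding good_def by auto
  have "Xl a x0 t = sol x0 t"
    using Xl_ode[OF g] assms(5) ode_unique[of "Xl a x0" "sol x0" t] sol_ode[OF assms(4)] sol_0[OF assms(4)] by auto
  then show ?thesis using Xl_cube[OF g assms(5)] by simp
qed

lemma sol_comp:
  assumes le: "x0 \<le> y0" and x0: "x0 \<in> cube" and y0: "y0 \<in> cube" and t: "t \<ge> 0"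
  shows "sol x0 t \<le> sol y0 t"
proof -
  have gx: "good 0 x0" and gy: "good 0 y0" using good0 x0 y0 by auto
  have it: "iter 0 x0 k s \<le> iter 0 y0 k s" if "s \<ge> 0" for k s
    using that
  proof (induction k arbitrary: s)
    case 0 then show ?case by simp
  next
    case (Suc k)
    have "Tm x0 (iter 0 x0 k) s \<le> Tm y0 (iter 0 y0 k) s"
    proof (rule T_mono[OF le iter_cont iter_cont])
      fix r :: real assume r: "r \<in> {0..s}"
      then have r0: "r \<ge> 0" by simp
      show "iter 0 x0 k r \<in> cube \<and> iter 0 y0 k r \<in> cube \<and> iter 0 x0 k r \<le> iter 0 y0 k r"
        using iter_cube[OF gx r0, of k] iter_cube[OF gy r0, of k] Suc.IH[OF r0] by blast
    qed
    then show ?case by simp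
  qed
  show ?thesis unfolding sol_def less_eq_vec_def
  proof
    fix i
    show "Xl 0 x0 t $ i \<le> Xl 0 y0 t $ i"
      by (rule LIMSEQ_le[OF Xl_lim_comp[OF gx t] Xl_lim_comp[OF gy t]])
        (use it[OF t] in \<open>auto simp: less_eq_vec_def simp del: iter.simps\<close>)
  qed
qed

lemma const_sol: "e \<in> cube \<Longrightarrow> F e = 0 \<Longrightarrow> t \<ge> 0 \<Longrightarrow> sol e t = e"
proof -
  assume e: "e \<in> cube" "F e = 0" and t: "t \<ge> 0"
  have "ode_solution F (\<lambda>_. e)" unfolding ode_solution_def using e(2)
    by (auto intro: has_vector_derivative_const)
  then show ?thesis using any_sol[of "\<lambda>_. e" t] e t by simp
qed

lemma sol_shift:
  assumes x0: "x0 \<in> cube" and h: "h \<ge> 0" and t: "t \<ge> 0"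
  shows "sol x0 (t + h) = sol (sol x0 h) t"
proof -
  have "ode_solution F (\<lambda>t. sol x0 (t + h))"
    unfolding ode_solution_def
  proof (intro allI impI)
    fix s :: real assume s: "s \<ge> 0"
    have d1: "((\<lambda>t. t + h) has_vector_derivative 1) (at s within {0..})"
      by (auto intro!: derivative_eq_intros simp: has_real_derivative_iff_has_vector_derivative[symmetric])
    have d2: "(sol x0 has_vector_derivative F (sol x0 (s + h))) (at (s + h) within (\<lambda>t. t + h) ` {0..})"
      by (rule has_vector_derivative_within_subset[of _ _ _ "{0..}"])
        (use sol_ode[OF x0] s h in \<open>auto simp: ode_solution_def\<close>)
    show "((\<lambda>t. sol x0 (t + h)) has_vector_derivative F (sol x0 (s + h))) (at s within {0..})"
      using vector_diff_chain_within[OF d1 d2] by (simp add: o_def)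
  qed
  then show ?thesis using any_sol[of "\<lambda>t. sol x0 (t + h)" t] sol_0 sol_cube x0 h t by simp
qed

end

lemma dec_conv:
  fixes f :: "real \<Rightarrow> real"
  assumes dec: "\<And>t h. t \<ge> 0 \<Longrightarrow> h \<ge> 0 \<Longrightarrow> f (t + h) \<le> f t"
    and bnd: "\<And>t. t \<ge> 0 \<Longrightarrow> m \<le> f t"
  shows "(f \<longlongrightarrow> Inf (f ` {0..})) at_top \<and> (\<forall>t\<ge>0. Inf (f ` {0..}) \<le> f t)"
proof -
  let ?l = "Inf (f ` {0..})"
  have bb: "bdd_below (f ` {0..})" using bnd by (auto intro!: bdd_belowI[of _ m])
  have ne: "f ` {0..} \<noteq> {}" by auto
  have low: "\<forall>t\<ge>0. ?l \<le> f t" using bb by (auto intro!: cInf_lower)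
  have "(f \<longlongrightarrow> ?l) at_top"
  proof (rule order_tendstoI)
    fix y assume "y < ?l"
    then show "eventually (\<lambda>t. y < f t) at_top"
      using low by (auto simp: eventually_at_top_linorder intro!: exI[of _ 0])
  next
    fix y assume "?l < y"
    then obtain T where T: "T \<ge> 0" "f T < y" using cInf_less_iff[OF ne bb] by auto
    have "f t < y" if "t \<ge> T" for t
      using dec[of T "t - T"] T that by auto
    then show "eventually (\<lambda>t. f t < y) at_top"
      by (auto simp: eventually_at_top_linorder)
  qed
  with low show ?thesis by blast
qed

lemma inc_conv:
  fixes f :: "real \<Rightarrow> real"
  assumes inc: "\<And>t h. t \<ge> 0 \<Longrightarrow> h \<ge> 0 \<Longrightarrow> f t \<le> f (t + h)"
    and bnd: "\<And>t. t \<ge> 0 \<Longrightarrow> f t \<le> m"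
  shows "\<exists>l. (f \<longlongrightarrow> l) at_top \<and> (\<forall>t\<ge>0. f t \<le> l)"
proof -
  have "((\<lambda>t. - f t) \<longlongrightarrow> Inf ((\<lambda>t. - f t) ` {0..})) at_top \<and>
        (\<forall>t\<ge>0. Inf ((\<lambda>t. - f t) ` {0..}) \<le> - f t)"
    by (rule dec_conv[where m="-m"]) (use inc bnd in auto)
  then have "(f \<longlongrightarrow> - Inf ((\<lambda>t. - f t) ` {0..})) at_top \<and>
        (\<forall>t\<ge>0. f t \<le> - Inf ((\<lambda>t. - f t) ` {0..}))"
    using tendsto_minus[of "\<lambda>t. - f t"] by fastforce
  then show ?thesis by blast
qed

lemma comp_deriv:
  fixes x :: "real \<Rightarrow> real^'n"
  assumes "(x has_vector_derivative v) (at t within S)"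
  shows "((\<lambda>s. x s $ i) has_real_derivative v $ i) (at t within S)"
proof -
  have "((\<lambda>s. x s $ i) has_derivative (\<lambda>h. (h *\<^sub>R v) $ i)) (at t within S)"
    using bounded_linear.has_derivative[OF bounded_linear_vec_nth assms[unfolded has_vector_derivative_def]] .
  moreover have "(\<lambda>h. (h *\<^sub>R v) $ i) = (*) (v $ i)" by (auto simp: fun_eq_iff)
  ultimately show ?thesis unfolding has_field_derivative_def by simp
qed

context sis begin

lemma lim_equil:
  assumes x: "ode_solution F x" and lim: "(x \<longlongrightarrow> e) at_top"
  shows "F e = 0"
proof (rule ccontr)
  assume "F e \<noteq> 0"
  then obtain i where vi: "F e $ i \<noteq> 0" by (auto simp: vec_eq_iff)
  define v where "v = F e $ i"
  have v0: "\<bar>v\<bar> > 0" using vi unfolding v_def by simp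
  have "((\<lambda>t. F (x t) $ i) \<longlongrightarrow> v) at_top"
    unfolding v_def by (intro tendsto_vec_nth isCont_tendsto_compose[OF F_isCont] lim)
  then have "eventually (\<lambda>t. dist (F (x t) $ i) v < \<bar>v\<bar>/2) at_top"
    by (rule tendstoD) (use v0 in simp)
  then obtain T1 where T1: "\<And>t. t \<ge> T1 \<Longrightarrow> \<bar>F (x t) $ i - v\<bar> < \<bar>v\<bar>/2"
    by (auto simp: eventually_at_top_linorder dist_real_def)
  have "((\<lambda>t. x t $ i) \<longlongrightarrow> e $ i) at_top" by (intro tendsto_vec_nth lim)
  then have "eventually (\<lambda>t. dist (x t $ i) (e $ i) < \<bar>v\<bar>/4) at_top"
    by (rule tendstoD) (use v0 in simp)
  then obtain T2 where T2: "\<And>t. t \<ge> T2 \<Longrightarrow> \<bar>x t $ i - e $ i\<bar> < \<bar>v\<bar>/4"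
    by (auto simp: eventually_at_top_linorder dist_real_def)
  define t where "t = max 1 (max T1 T2)"
  have der: "DERIV (\<lambda>s. x s $ i) s :> F (x s) $ i" if "t \<le> s" for s
  proof -
    have s0: "s > 0" using that unfolding t_def by linarith
    have "((\<lambda>s. x s $ i) has_real_derivative F (x s) $ i) (at s within {0..})"
      using x s0 unfolding ode_solution_def by (intro comp_deriv) auto
    moreover have "at s within {0..} = at s within UNIV"
      by (rule at_within_nhd[where S="{0<..}"]) (use s0 in auto)
    ultimately show ?thesis by simp
  qed
  obtain z where z: "t < z" "z < t + 1" "x (t+1) $ i - x t $ i = (t + 1 - t) * F (x z) $ i"
  proof -
    have tt: "t < t + 1" by simp
    have der': "DERIV (\<lambda>s. x s $ i) s :> F (x s) $ i" if "t \<le> s" "s \<le> t + 1" for s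
      using der that(1) .
    show ?thesis using MVT2[OF tt der'] that by blast
  qed
  have "\<bar>F (x z) $ i - v\<bar> < \<bar>v\<bar>/2" using T1[of z] z unfolding t_def by auto
  moreover have "\<bar>x (t+1) $ i - e $ i\<bar> < \<bar>v\<bar>/4" "\<bar>x t $ i - e $ i\<bar> < \<bar>v\<bar>/4"
    using T2[of "t+1"] T2[of t] unfolding t_def by auto
  moreover have "x (t+1) $ i - x t $ i = F (x z) $ i" using z(3) by simp
  ultimately show False by arith
qed

end

context sis begin

lemma cube_le_one: "p \<in> cube \<Longrightarrow> p \<le> 1"
  by (auto simp: cube_def less_eq_vec_def)

lemma sol_dec: "t \<ge> 0 \<Longrightarrow> h \<ge> 0 \<Longrightarrow> sol 1 (t + h) \<le> sol 1 t"
proof -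
  assume t: "t \<ge> 0" and h: "h \<ge> 0"
  have c: "sol 1 h \<in> cube" by (rule sol_cube[OF one_cube h])
  have "sol 1 (t + h) = sol (sol 1 h) t" by (rule sol_shift[OF one_cube h t])
  also have "\<dots> \<le> sol 1 t" by (rule sol_comp[OF cube_le_one[OF c] c one_cube t])
  finally show ?thesis .
qed

lemma sol_inc:
  assumes a: "a \<in> cube" "0 \<le> F a" and t: "t \<ge> 0" and h: "h \<ge> 0"
  shows "sol a t \<le> sol a (t + h)"
proof -
  have c: "sol a h \<in> cube" by (rule sol_cube[OF a(1) h])
  have le: "a \<le> sol a h" by (rule sol_lower[OF a(1) a(2) order_refl a(1) h])
  have "sol a t \<le> sol (sol a h) t" by (rule sol_comp[OF le a(1) c t])
  also have "\<dots> = sol a (t + h)" by (rule sol_shift[OF a(1) h t, symmetric])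
  finally show ?thesis .
qed

lemma vec_lim_cube:
  fixes x :: "real \<Rightarrow> real^'n"
  assumes lim: "(x \<longlongrightarrow> e) at_top" and cx: "\<And>t. t \<ge> 0 \<Longrightarrow> x t \<in> cube"
  shows "e \<in> cube"
proof -
  have "0 \<le> e $ i \<and> e $ i \<le> 1" for i
  proof -
    have l: "((\<lambda>t. x t $ i) \<longlongrightarrow> e $ i) at_top" by (intro tendsto_vec_nth lim)
    have ev: "eventually (\<lambda>t. 0 \<le> x t $ i \<and> x t $ i \<le> 1) at_top"
      by (rule eventually_at_top_linorderI[of 0]) (use cx in \<open>auto simp: cube_def\<close>)
    show ?thesis
      using tendsto_lowerbound[OF l, of 0] tendsto_upperbound[OF l, of 1]
        eventually_mono[OF ev, of "\<lambda>t. 0 \<le> x t $ i"] eventually_mono[OF ev, of "\<lambda>t. x t $ i \<le> 1"]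
      by auto
  qed
  then show ?thesis unfolding cube_def by auto
qed

lemma vec_lim_le:
  fixes x :: "real \<Rightarrow> real^'n"
  assumes lim: "(x \<longlongrightarrow> e) at_top" and le: "\<And>t. t \<ge> T \<Longrightarrow> a \<le> x t"
  shows "a \<le> e"
proof (unfold less_eq_vec_def, intro allI)
  fix i
  have l: "((\<lambda>t. x t $ i) \<longlongrightarrow> e $ i) at_top" by (intro tendsto_vec_nth lim)
  show "a $ i \<le> e $ i"
    by (rule tendsto_lowerbound[OF l]) (use le in \<open>auto simp: less_eq_vec_def eventually_at_top_linorder\<close>)
qed

lemma vec_lim_ge:
  fixes x :: "real \<Rightarrow> real^'n"
  assumes lim: "(x \<longlongrightarrow> e) at_top" and le: "\<And>t. t \<ge> T \<Longrightarrow> x t \<le> a"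
  shows "e \<le> a"
proof (unfold less_eq_vec_def, intro allI)
  fix i
  have l: "((\<lambda>t. x t $ i) \<longlongrightarrow> e $ i) at_top" by (intro tendsto_vec_nth lim)
  show "e $ i \<le> a $ i"
    by (rule tendsto_upperbound[OF l]) (use le in \<open>auto simp: less_eq_vec_def eventually_at_top_linorder\<close>)
qed

lemma top_limit: "\<exists>p. (sol 1 \<longlongrightarrow> p) at_top \<and> p \<in> cube \<and> F p = 0 \<and> (\<forall>t\<ge>0. p \<le> sol 1 t)"
proof -
  define p where "p = (\<chi> i. Inf ((\<lambda>t. sol 1 t $ i) ` {0..}))"
  have c: "((\<lambda>t. sol 1 t $ i) \<longlongrightarrow> p $ i) at_top \<and> (\<forall>t\<ge>0. p $ i \<le> sol 1 t $ i)" for i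
    unfolding p_def vec_lambda_beta
    by (rule dec_conv[where m=0])
      (use sol_dec sol_cube[OF one_cube] in \<open>auto simp: less_eq_vec_def cube_def\<close>)
  have lim: "(sol 1 \<longlongrightarrow> p) at_top" using c by (intro vec_tendstoI) auto
  moreover have "p \<in> cube" using vec_lim_cube[OF lim] sol_cube[OF one_cube] by auto
  moreover have "F p = 0" using lim_equil[OF sol_ode[OF one_cube] lim] .
  moreover have "\<forall>t\<ge>0. p \<le> sol 1 t" using c by (auto simp: less_eq_vec_def)
  ultimately show ?thesis by blast
qed

lemma sub_limit:
  assumes a: "a \<in> cube" "0 \<le> F a"
  shows "\<exists>e. (sol a \<longlongrightarrow> e) at_top \<and> e \<in> cube \<and> F e = 0 \<and> a \<le> e"
proof -
  have "\<exists>l. ((\<lambda>t. sol a t $ i) \<longlongrightarrow> l) at_top \<and> (\<forall>t\<ge>0. sol a t $ i \<le> l)" for i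
    by (rule inc_conv[where m=1])
      (use sol_inc[OF a] sol_cube[OF a(1)] in \<open>auto simp: less_eq_vec_def cube_def\<close>)
  then obtain l where l: "\<And>i. ((\<lambda>t. sol a t $ i) \<longlongrightarrow> l i) at_top" by metis
  define e where "e = (\<chi> i. l i)"
  have lim: "(sol a \<longlongrightarrow> e) at_top" unfolding e_def using l by (intro vec_tendstoI) auto
  moreover have "e \<in> cube" using vec_lim_cube[OF lim] sol_cube[OF a(1)] by auto
  moreover have "F e = 0" using lim_equil[OF sol_ode[OF a(1)] lim] .
  moreover have "a \<le> e" using vec_lim_le[OF lim, of 0 a] sol_lower[of a a] a by auto
  ultimately show ?thesis by blast
qed

end

context sis begin

definition pbar where
  "pbar = (SOME p. (sol 1 \<longlongrightarrow> p) at_top \<and> p \<in> cube \<and> F p = 0 \<and> (\<forall>t\<ge>0. p \<le> sol 1 t))"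

lemma pbar: "(sol 1 \<longlongrightarrow> pbar) at_top" "pbar \<in> cube" "F pbar = 0" "\<And>t. t \<ge> 0 \<Longrightarrow> pbar \<le> sol 1 t"
  using someI_ex[OF top_limit] unfolding pbar_def[symmetric] by auto

lemma pbar_max: assumes "e \<in> cube" "F e = 0" shows "e \<le> pbar"
proof (rule vec_lim_le[OF pbar(1), of 0])
  fix t :: real assume t: "t \<ge> 0"
  have "e = sol e t" using const_sol[OF assms t] by simp
  also have "\<dots> \<le> sol 1 t" by (rule sol_comp[OF cube_le_one[OF assms(1)] assms(1) one_cube t])
  finally show "e \<le> sol 1 t" .
qed

lemma Bv_scale: "(B *v (\<alpha> *\<^sub>R p))$i = \<alpha> * (B *v p)$i"
  by (simp add: Bv sum_distrib_left algebra_simps)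

lemma Bv_add: "(B *v (p + q))$i = (B *v p)$i + (B *v q)$i"
  by (simp add: Bv sum.distrib algebra_simps)

lemma Bv_diff: "(B *v (p - q))$i = (B *v p)$i - (B *v q)$i"
  by (simp add: Bv sum_subtractf algebra_simps)

lemma F_scale: "F (\<alpha> *\<^sub>R p) $ i - \<alpha> * F p $ i = cc$i * ((1 - \<alpha>) * lam$i + \<alpha> * (1 - \<alpha>) * p$i * (B *v p)$i)"
  unfolding F_def vec_lambda_beta Bv_scale by (simp add: algebra_simps)

lemma F_seg: "F (p + \<epsilon> *\<^sub>R (q - p)) $ i = (1 - \<epsilon>) * F p $ i + \<epsilon> * F q $ i
    + \<epsilon> * (1 - \<epsilon>) * cc$i * (q$i - p$i) * (B *v (q - p))$i"
  unfolding F_def vec_lambda_beta Bv_add Bv_scale Bv_diff by (simp add: algebra_simps)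

lemma scale_cube: "p \<in> cube \<Longrightarrow> 0 \<le> \<alpha> \<Longrightarrow> \<alpha> \<le> 1 \<Longrightarrow> \<alpha> *\<^sub>R p \<in> cube"
  unfolding cube_def by (auto intro: mult_le_one)

lemma subhom:
  assumes p: "p \<in> cube" "F p = 0" and a: "0 \<le> \<alpha>" "\<alpha> \<le> 1"
  shows "0 \<le> F (\<alpha> *\<^sub>R p)"
  unfolding less_eq_vec_def
proof
  fix i
  have "0 \<le> cc$i * ((1 - \<alpha>) * lam$i + \<alpha> * (1 - \<alpha>) * p$i * (B *v p)$i)"
    using c_pos[of i] lam[of i] a p(1) Bv_nonneg[OF p(1), of i]
    by (intro mult_nonneg_nonneg add_nonneg_nonneg) (auto simp: cube_def)
  then show "0 $ i \<le> F (\<alpha> *\<^sub>R p) $ i" using F_scale[of \<alpha> p i] p(2) by simp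
qed

lemma kras:
  assumes p: "p \<in> cube" "F p = 0" and e: "e \<in> cube" "F e = 0" and al: "0 < \<alpha>"
    and le1: "\<alpha> *\<^sub>R p \<le> e" and le2: "e \<le> p"
  shows "e = p"
proof (rule ccontr)
  assume "e \<noteq> p"
  then obtain j where "e$j \<noteq> p$j" by (auto simp: vec_eq_iff)
  with le2 have ej: "e$j < p$j" by (auto simp: less_eq_vec_def order.order_iff_strict)
  have e0: "\<And>k. 0 \<le> e$k" and p0: "\<And>k. 0 \<le> p$k" and e1: "\<And>k. e$k \<le> 1" and p1: "\<And>k. p$k \<le> 1"
    using e(1) p(1) by (auto simp: cube_def)
  define S where "S = {k. 0 < p$k}"
  define r where "r = (\<lambda>k. e$k / p$k)"
  define \<beta> where "\<beta> = Min (r ` S)"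
  have jS: "j \<in> S" unfolding S_def using ej e0[of j] by simp
  have fin: "finite (r ` S)" and ne: "r ` S \<noteq> {}" using jS by auto
  obtain i where iS: "i \<in> S" and bi: "\<beta> = r i" using Min_in[OF fin ne] unfolding \<beta>_def by auto
  have pi: "p$i > 0" using iS unfolding S_def by simp
  have b_le: "\<beta> \<le> r k" if "k \<in> S" for k unfolding \<beta>_def using fin that by simp
  have b1: "\<beta> < 1"
  proof -
    have "r j < 1" unfolding r_def using ej jS unfolding S_def by simp
    then show ?thesis using b_le[OF jS] by simp
  qed
  have rk: "\<alpha> \<le> r k" if "k \<in> S" for k
  proof -
    have "\<alpha> * p$k \<le> e$k" using le1 by (simp add: less_eq_vec_def)
    then show ?thesis unfolding r_def using that unfolding S_def by (simp add: pos_le_divide_eq)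
  qed
  have ba: "\<alpha> \<le> \<beta>" unfolding \<beta>_def using fin ne rk by simp
  have b0: "0 < \<beta>" using ba al by simp
  have ge: "\<beta> *\<^sub>R p \<le> e"
    unfolding less_eq_vec_def
  proof
    fix k
    show "(\<beta> *\<^sub>R p) $ k \<le> e $ k"
    proof (cases "k \<in> S")
      case True
      then have "\<beta> \<le> e$k / p$k" using b_le unfolding r_def by simp
      then show ?thesis using True unfolding S_def by (simp add: pos_le_divide_eq)
    next
      case False
      then have "p$k = 0" using p0[of k] unfolding S_def by simp
      then show ?thesis using e0[of k] by simp
    qed
  qed
  have ei: "e$i = \<beta> * p$i" using bi pi unfolding r_def by simp
  define A where "A = (B *v p)$i"
  have BA: "\<beta> * A \<le> (B *v e)$i" using Bv_mono[OF ge, of i] unfolding A_def Bv_scale .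
  have "(1 - \<beta> * p$i) * cc$i * (lam$i + \<beta> * A) \<le> (1 - e$i) * cc$i * (lam$i + (B *v e)$i)"
    unfolding ei using BA e1[of i] ei c_pos[of i] by (intro mult_left_mono) auto
  then have Fe: "F (\<beta> *\<^sub>R p) $ i \<le> F e $ i"
    unfolding F_def vec_lambda_beta Bv_scale A_def[symmetric] ei by simp
  have pos: "0 < cc$i * ((1 - \<beta>) * lam$i + \<beta> * (1 - \<beta>) * p$i * A)"
  proof -
    have "(1 - p$i) * cc$i * (lam$i + A) = del$i * p$i"
      using p(2) unfolding F_def A_def by (simp add: vec_eq_iff)
    moreover have "del$i * p$i > 0" using del[of i] pi by simp
    ultimately have "(1 - p$i) * cc$i * (lam$i + A) > 0" by simp
    moreover have "(1 - p$i) * cc$i \<ge> 0" using p1[of i] c_pos[of i] by simp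
    ultimately have lA: "lam$i + A > 0"
      by (metis mult_nonneg_nonpos not_less)
    have A0: "A \<ge> 0" unfolding A_def by (rule Bv_nonneg[OF p(1)])
    have "0 < (1 - \<beta>) * lam$i + \<beta> * (1 - \<beta>) * p$i * A"
    proof (cases "lam$i > 0")
      case True
      then have "0 < (1 - \<beta>) * lam$i" using b1 by simp
      moreover have "0 \<le> \<beta> * (1 - \<beta>) * p$i * A" using b0 b1 pi A0 by simp
      ultimately show ?thesis by simp
    next
      case False
      then have "A > 0" using lA lam[of i] by simp
      then have "0 < \<beta> * (1 - \<beta>) * p$i * A" using b0 b1 pi by simp
      moreover have "0 \<le> (1 - \<beta>) * lam$i" using b1 lam[of i] by simp
      ultimately show ?thesis by simp
    qed
    then show ?thesis using c_pos[of i] by simp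
  qed
  have "F (\<beta> *\<^sub>R p) $ i = cc$i * ((1 - \<beta>) * lam$i + \<beta> * (1 - \<beta>) * p$i * A)"
    using F_scale[of \<beta> p i] p(2) unfolding A_def by simp
  then have "F e $ i > 0" using Fe pos by simp
  then show False using e(2) by simp
qed

end

context sis begin

definition "mpos = Min (insert 1 ((\<lambda>i. pbar$i) ` {i. pbar$i > 0}))"

lemma mpos: "mpos > 0" "\<And>i. pbar$i > 0 \<Longrightarrow> mpos \<le> pbar$i"
proof -
  have fin: "finite (insert 1 ((\<lambda>i. pbar$i) ` {i. pbar$i > 0}))" by simp
  show "mpos > 0" unfolding mpos_def using fin by (subst Min_gr_iff) auto
  show "\<And>i. pbar$i > 0 \<Longrightarrow> mpos \<le> pbar$i" unfolding mpos_def using fin by (auto intro: Min_le)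
qed

lemma comp_dist: "\<bar>x$i - y$i\<bar> \<le> dist x y"
  using component_le_norm_cart[of "x - y" i] by (simp add: dist_norm)

lemma lower_bound:
  assumes x0: "x0 \<in> cube" and al: "0 \<le> \<eta>" "\<eta> \<le> 1" and d: "dist x0 pbar < \<eta> * mpos"
  shows "(1 - \<eta>) *\<^sub>R pbar \<le> x0"
  unfolding less_eq_vec_def
proof
  fix i
  show "((1 - \<eta>) *\<^sub>R pbar) $ i \<le> x0 $ i"
  proof (cases "pbar$i > 0")
    case True
    have "pbar$i - x0$i < \<eta> * mpos" using comp_dist[of x0 i pbar] d by simp
    also have "\<dots> \<le> \<eta> * pbar$i" using mpos(2)[OF True] al by (simp add: mult_left_mono)
    finally show ?thesis by (simp add: algebra_simps)
  next
    case False
    then have "pbar$i = 0" using pbar(2) by (auto simp: cube_def intro: antisym)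
    then show ?thesis using x0 by (auto simp: cube_def)
  qed
qed

lemma pbar_attr: "attractive F cube pbar"
  unfolding attractive_def
proof (intro exI conjI allI impI)
  show "0 < (1/2) * mpos" using mpos by simp
  fix x assume asm: "ode_solution F x \<and> x 0 \<in> cube \<and> dist (x 0) pbar < (1/2) * mpos"
  then have x: "ode_solution F x" and x0: "x 0 \<in> cube" and dx: "dist (x 0) pbar < (1/2) * mpos" by auto
  define a where "a = (1/2::real) *\<^sub>R pbar"
  have ac: "a \<in> cube" unfolding a_def by (rule scale_cube[OF pbar(2)]) auto
  have aF: "0 \<le> F a" unfolding a_def by (rule subhom[OF pbar(2) pbar(3)]) auto
  have ax: "a \<le> x 0" using lower_bound[OF x0, of "1/2"] dx unfolding a_def by simp
  obtain e where e: "(sol a \<longlongrightarrow> e) at_top" "e \<in> cube" "F e = 0" "a \<le> e"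
    using sub_limit[OF ac aF] by blast
  have "e = pbar"
    by (rule kras[OF pbar(2) pbar(3) e(2) e(3), of "1/2"]) (use e(4) pbar_max[OF e(2) e(3)] in \<open>auto simp: a_def\<close>)
  with e(1) have lo: "(sol a \<longlongrightarrow> pbar) at_top" by simp
  have sand: "sol a t \<le> x t \<and> x t \<le> sol 1 t" if t: "t \<ge> 0" for t
  proof -
    have "x t = sol (x 0) t" by (rule any_sol[OF x x0 t])
    moreover have "sol a t \<le> sol (x 0) t" by (rule sol_comp[OF ax ac x0 t])
    moreover have "sol (x 0) t \<le> sol 1 t" by (rule sol_comp[OF cube_le_one[OF x0] x0 one_cube t])
    ultimately show ?thesis by simp
  qed
  show "(x \<longlongrightarrow> pbar) at_top"
  proof (rule vec_tendstoI)
    fix i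
    show "((\<lambda>t. x t $ i) \<longlongrightarrow> pbar $ i) at_top"
    proof (rule tendsto_sandwich[of "\<lambda>t. sol a t $ i" _ _ "\<lambda>t. sol 1 t $ i"])
      show "eventually (\<lambda>t. sol a t $ i \<le> x t $ i) at_top"
        by (rule eventually_at_top_linorderI[of 0]) (use sand in \<open>auto simp: less_eq_vec_def\<close>)
      show "eventually (\<lambda>t. x t $ i \<le> sol 1 t $ i) at_top"
        by (rule eventually_at_top_linorderI[of 0]) (use sand in \<open>auto simp: less_eq_vec_def\<close>)
      show "((\<lambda>t. sol a t $ i) \<longlongrightarrow> pbar $ i) at_top" by (intro tendsto_vec_nth lo)
      show "((\<lambda>t. sol 1 t $ i) \<longlongrightarrow> pbar $ i) at_top" by (intro tendsto_vec_nth pbar(1))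
    qed
  qed
qed

lemma norm_from_comps:
  fixes v :: "real^'n"
  assumes "\<And>i. \<bar>v$i\<bar> \<le> c"
  shows "norm v \<le> real CARD('n) * c"
proof -
  have "norm v \<le> (\<Sum>i\<in>UNIV. \<bar>v$i\<bar>)" by (rule norm_le_l1_cart)
  also have "\<dots> \<le> real CARD('n) * c" using sum_bounded_above[of UNIV "\<lambda>i. \<bar>v$i\<bar>" c] assms by simp
  finally show ?thesis .
qed

lemma pbar_lyap: "lyapunov_stable F cube pbar"
  unfolding lyapunov_stable_def
proof (intro allI impI)
  fix \<epsilon> :: real assume ep: "\<epsilon> > 0"
  define N where "N = real CARD('n)"
  have N1: "N \<ge> 1" unfolding N_def by simp
  define \<eta> where "\<eta> = min (1/2) (\<epsilon> / (2 * N))"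
  have eta: "\<eta> > 0" "\<eta> \<le> 1/2" "N * \<eta> < \<epsilon>"
  proof -
    show "\<eta> > 0" unfolding \<eta>_def using ep N1 by simp
    show "\<eta> \<le> 1/2" unfolding \<eta>_def by simp
    have "N * \<eta> \<le> N * (\<epsilon> / (2 * N))" unfolding \<eta>_def using N1 by (intro mult_left_mono) auto
    also have "\<dots> = \<epsilon> / 2" using N1 by simp
    finally show "N * \<eta> < \<epsilon>" using ep by simp
  qed
  have "eventually (\<lambda>t. dist (sol 1 t) pbar < \<eta>) at_top" by (rule tendstoD[OF pbar(1) eta(1)])
  then obtain T1 where T1: "\<And>t. t \<ge> T1 \<Longrightarrow> dist (sol 1 t) pbar < \<eta>"
    by (auto simp: eventually_at_top_linorder)
  define T0 where "T0 = max 0 T1"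
  define K :: real where "K = 2 ^ nat \<lceil>2 * Lq * T0\<rceil>"
  have K1: "K \<ge> 1" unfolding K_def by simp
  define d where "d = min (\<eta> * mpos) (\<eta> / (K * N))"
  have d0: "d > 0" unfolding d_def using eta mpos K1 N1 by simp
  show "\<exists>d>0. \<forall>x. ode_solution F x \<and> x 0 \<in> cube \<and> dist (x 0) pbar < d \<longrightarrow> (\<forall>t\<ge>0. dist (x t) pbar < \<epsilon>)"
  proof (intro exI conjI allI impI)
    show "d > 0" by (rule d0)
    fix x and t :: real
    assume asm: "ode_solution F x \<and> x 0 \<in> cube \<and> dist (x 0) pbar < d" and t: "t \<ge> 0"
    then have x: "ode_solution F x" and x0: "x 0 \<in> cube" and dx: "dist (x 0) pbar < d" by auto
    have xt: "x t = sol (x 0) t" by (rule any_sol[OF x x0 t])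
    define a where "a = (1 - \<eta>) *\<^sub>R pbar"
    have ac: "a \<in> cube" unfolding a_def by (rule scale_cube[OF pbar(2)]) (use eta in auto)
    have aF: "0 \<le> F a" unfolding a_def by (rule subhom[OF pbar(2) pbar(3)]) (use eta in auto)
    have ax: "a \<le> x 0" unfolding a_def
      by (rule lower_bound[OF x0]) (use eta dx in \<open>auto simp: d_def\<close>)
    have low: "a \<le> x t" unfolding xt by (rule sol_lower[OF ac aF ax x0 t])
    have up: "x t $ i \<le> pbar $ i + \<eta>" for i
    proof (cases "t \<ge> T0")
      case True
      have "x t \<le> sol 1 t" unfolding xt by (rule sol_comp[OF cube_le_one[OF x0] x0 one_cube t])
      moreover have "\<bar>sol 1 t $ i - pbar $ i\<bar> < \<eta>"
        using comp_dist[of "sol 1 t" i pbar] T1[of t] True unfolding T0_def by simp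
      ultimately show ?thesis by (auto simp: less_eq_vec_def dest: spec[of _ i])
    next
      case False
      define u0 where "u0 = (\<chi> i. min 1 (pbar$i + d))"
      have p01: "0 \<le> pbar$k" "pbar$k \<le> 1" for k using pbar(2) by (auto simp: cube_def)
      have uc: "u0 \<in> cube" unfolding u0_def cube_def using p01 d0 by (auto simp: min_def)
      have xu: "x 0 \<le> u0" unfolding less_eq_vec_def u0_def
      proof
        fix k
        have "x 0 $ k \<le> 1" using x0 by (auto simp: cube_def)
        moreover have "x 0 $ k \<le> pbar$k + d" using comp_dist[of "x 0" k pbar] dx by simp
        ultimately show "x 0 $ k \<le> (\<chi> i. min 1 (pbar$i + d)) $ k" by simp
      qed
      have "x t \<le> sol u0 t" unfolding xt by (rule sol_comp[OF xu x0 uc t])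
      moreover have "norm (sol u0 t - sol pbar t) \<le> K * norm (sol u0 0 - sol pbar 0)"
        unfolding K_def
        by (rule ode_dep[OF sol_ode[OF uc] sol_ode[OF pbar(2)]])
          (use sol_cube[OF uc] sol_cube[OF pbar(2)] t False in auto)
      moreover have "sol pbar t = pbar" by (rule const_sol[OF pbar(2) pbar(3) t])
      moreover have "sol u0 0 = u0" "sol pbar 0 = pbar" using sol_0 uc pbar(2) by auto
      moreover have "norm (u0 - pbar) \<le> N * d"
        unfolding N_def by (rule norm_from_comps) (use p01 d0 in \<open>auto simp: u0_def min_def\<close>)
      moreover have "K * (N * d) \<le> \<eta>"
      proof -
        have "d \<le> \<eta> / (K * N)" unfolding d_def by simp
        then have "K * N * d \<le> K * N * (\<eta> / (K * N))" using K1 N1 by (intro mult_left_mono) auto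
        then show ?thesis using K1 N1 by (simp add: mult.assoc)
      qed
      ultimately have "norm (sol u0 t - pbar) \<le> \<eta>"
        by (metis K1 mult_left_mono order_trans zero_le_one)
      then have "sol u0 t $ i - pbar $ i \<le> \<eta>"
        using component_le_norm_cart[of "sol u0 t - pbar" i] by simp
      with \<open>x t \<le> sol u0 t\<close> show ?thesis by (auto simp: less_eq_vec_def dest: spec[of _ i])
    qed
    have "\<bar>(x t - pbar) $ i\<bar> \<le> \<eta>" for i
    proof -
      have "(1 - \<eta>) * pbar$i \<le> x t $ i" using low unfolding a_def by (simp add: less_eq_vec_def)
      moreover have "\<eta> * pbar$i \<le> \<eta>" using pbar(2) eta by (auto simp: cube_def intro: mult_left_le)
      ultimately show ?thesis using up[of i] by (simp add: algebra_simps)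
    qed
    then have "norm (x t - pbar) \<le> N * \<eta>" unfolding N_def by (rule norm_from_comps)
    then show "dist (x t) pbar < \<epsilon>" using eta(3) by (simp add: dist_norm)
  qed
qed

lemma stable_unique:
  assumes st: "stable_equilibrium F cube p"
  shows "p = pbar"
proof (rule ccontr)
  assume ne: "p \<noteq> pbar"
  have pc: "p \<in> cube" and pF: "F p = 0" using st unfolding stable_equilibrium_def equilibrium_def by auto
  obtain d where d: "d > 0" and att: "\<And>x. ode_solution F x \<and> x 0 \<in> cube \<and> dist (x 0) p < d \<Longrightarrow> (x \<longlongrightarrow> p) at_top"
    using st unfolding stable_equilibrium_def attractive_def by blast
  have pp: "p \<le> pbar" by (rule pbar_max[OF pc pF])
  define v where "v = pbar - p"
  have nv: "norm v > 0" using ne unfolding v_def by simp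
  define \<epsilon> where "\<epsilon> = min (1/2) (d / (2 * norm v))"
  have ep: "\<epsilon> > 0" "\<epsilon> \<le> 1/2" "\<epsilon> * norm v < d"
  proof -
    show "\<epsilon> > 0" unfolding \<epsilon>_def using d nv by simp
    show "\<epsilon> \<le> 1/2" unfolding \<epsilon>_def by simp
    have "\<epsilon> * norm v \<le> d / (2 * norm v) * norm v" unfolding \<epsilon>_def using nv by (intro mult_right_mono) auto
    also have "\<dots> = d / 2" using nv by simp
    finally show "\<epsilon> * norm v < d" using d by simp
  qed
  define x0 where "x0 = p + \<epsilon> *\<^sub>R v"
  have comps: "0 \<le> p$k" "p$k \<le> pbar$k" "pbar$k \<le> 1" for k
    using pc pp pbar(2) by (auto simp: cube_def less_eq_vec_def)
  have x0c: "x0 \<in> cube" unfolding cube_def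
  proof (intro CollectI allI conjI)
    fix k
    have e1: "\<epsilon> * (pbar$k - p$k) \<ge> 0" using comps[of k] ep by simp
    then show "0 \<le> x0$k" unfolding x0_def v_def using comps[of k] by simp
    have "\<epsilon> * (pbar$k - p$k) \<le> 1 * (pbar$k - p$k)" using comps[of k] ep by (intro mult_right_mono) auto
    then show "x0$k \<le> 1" unfolding x0_def v_def using comps[of k] by simp
  qed
  have vc: "v \<in> cube" unfolding v_def cube_def
  proof (intro CollectI allI)
    fix k show "0 \<le> (pbar - p) $ k \<and> (pbar - p) $ k \<le> 1" using comps[of k] by simp
  qed
  have x0F: "0 \<le> F x0"
    unfolding less_eq_vec_def
  proof
    fix i
    have "F x0 $ i = \<epsilon> * (1 - \<epsilon>) * cc$i * (pbar$i - p$i) * (B *v (pbar - p))$i"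
      using F_seg[of p \<epsilon> pbar i] pF pbar(3) unfolding x0_def v_def by simp
    moreover have "0 \<le> \<epsilon> * (1 - \<epsilon>) * cc$i * (pbar$i - p$i) * (B *v (pbar - p))$i"
      using ep c_pos[of i] comps[of i] Bv_nonneg[OF vc, of i] unfolding v_def
      by (intro mult_nonneg_nonneg) auto
    ultimately show "0 $ i \<le> F x0 $ i" by simp
  qed
  have "(sol x0 \<longlongrightarrow> p) at_top"
    by (rule att) (use sol_ode[OF x0c] sol_0[OF x0c] x0c ep(3) ep(1) in \<open>auto simp: x0_def dist_norm\<close>)
  moreover have "\<And>t. t \<ge> 0 \<Longrightarrow> x0 \<le> sol x0 t" by (rule sol_lower[OF x0c x0F order_refl x0c])
  ultimately have "x0 \<le> p" by (rule vec_lim_le)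
  then have "v = 0"
  proof -
    assume le: "x0 \<le> p"
    have "v$k = 0" for k
    proof -
      have "\<epsilon> * v$k \<le> 0" using le unfolding x0_def less_eq_vec_def by (auto dest: spec[of _ k])
      moreover have "v$k \<ge> 0" using comps[of k] unfolding v_def by simp
      ultimately show ?thesis using ep(1) by (simp add: mult_le_0_iff)
    qed
    then show ?thesis by (simp add: vec_eq_iff)
  qed
  then show False using nv by simp
qed

end

theorem proposition1:
  fixes lam del :: "real ^ 'n"
    and B :: "real ^ 'n ^ 'n"
    and q :: "'n \<Rightarrow> real \<Rightarrow> real"
    and S :: "(real ^ 'n) set"
    and s :: "real ^ 'n"
  assumes N2: "CARD('n) \<ge> 2"
    and lam_nonneg: "\<forall>i. lam $ i \<ge> 0"
    and lam_pos_set: "{i. lam $ i > 0} \<noteq> {}" "{i. lam $ i > 0} \<noteq> UNIV"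
    and del_pos: "\<forall>i. del $ i > 0"
    and B_nonneg: "\<forall>i j. B $ i $ j \<ge> 0"
    and B_diag: "\<forall>i. B $ i $ i = 0"
    and weak: "weakly_connected (infection_edges B)"
    and not_strong: "\<not> strongly_connected (infection_edges B)"
    and S_convex: "convex S"
    and S_nonneg: "S \<subseteq> {x. \<forall>i. x $ i \<ge> 0}"
    and q_range: "\<forall>i. \<forall>x\<ge>0. 0 < q i x \<and> q i x \<le> 1"
    and q_decr: "\<forall>i. \<forall>x y. 0 \<le> x \<and> x \<le> y \<longrightarrow> q i y \<le> q i x"
    and q_strict_convex: "\<forall>i. strictly_convex_on {0..} (q i)"
    and q_C1: "\<forall>i. \<exists>q'. continuous_on {0..} q' \<and>
                 (\<forall>x\<ge>0. (q i has_real_derivative q' x) (at x within {0..}))"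
    and s_in: "s \<in> S"
  shows "\<exists>pbar. (\<forall>p. stable_equilibrium (sis_field lam B del q s) unit_cube p \<longleftrightarrow> p = pbar)
           \<and> (\<forall>i. (1 - pbar $ i) * (lam $ i + (B *v pbar) $ i)
                   - inverse (q i (s $ i)) * del $ i * pbar $ i = 0)"
proof -
  define c :: "real^'n" where "c = (\<chi> i. q i (s $ i))"
  have s0: "s $ i \<ge> 0" for i using S_nonneg s_in by auto
  have cq: "0 < c $ i \<and> c $ i \<le> 1" for i unfolding c_def using q_range s0 by simp
  interpret M: sis lam del c B
    by unfold_locales (use lam_nonneg del_pos B_nonneg cq in auto)
  have FF: "sis_field lam B del q s = M.F"
  proof (rule ext)
    fix p show "sis_field lam B del q s p = M.F p" unfolding sis_field_def M.F_def by (simp add: c_def)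
  qed
  have CC: "unit_cube = M.cube" by (simp add: unit_cube_def M.cube_def)
  show ?thesis
  proof (intro exI conjI allI)
    fix p
    show "stable_equilibrium (sis_field lam B del q s) unit_cube p \<longleftrightarrow> p = M.pbar"
      unfolding FF CC
    proof
      assume "stable_equilibrium M.F M.cube p" then show "p = M.pbar" by (rule M.stable_unique)
    next
      assume "p = M.pbar"
      then show "stable_equilibrium M.F M.cube p"
        unfolding stable_equilibrium_def equilibrium_def
        using M.pbar_attr M.pbar_lyap M.pbar(2) M.pbar(3) by simp
    qed
  next
    fix i
    have "M.F M.pbar $ i = 0" using M.pbar(3) by simp
    then have "(1 - M.pbar $ i) * c$i * (lam $ i + (B *v M.pbar) $ i) = del$i * M.pbar$i"
      unfolding M.F_def by simp
    moreover have "c$i = q i (s $ i)" unfolding c_def by simp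
    ultimately show "(1 - M.pbar $ i) * (lam $ i + (B *v M.pbar) $ i)
                   - inverse (q i (s $ i)) * del $ i * M.pbar $ i = 0"
    proof -
      assume h: "(1 - M.pbar $ i) * c$i * (lam $ i + (B *v M.pbar) $ i) = del$i * M.pbar$i"
        and hc: "c$i = q i (s $ i)"
      have "inverse (q i (s $ i)) * del $ i * M.pbar $ i = inverse (c$i) * (del$i * M.pbar$i)"
        using hc by (simp add: mult.assoc)
      also have "\<dots> = inverse (c$i) * ((1 - M.pbar $ i) * c$i * (lam $ i + (B *v M.pbar) $ i))"
        using h by simp
      also have "\<dots> = (1 - M.pbar $ i) * (lam $ i + (B *v M.pbar) $ i)"
        using cq[of i] by simp
      finally show ?thesis by simp
    qed
  qed
qed

end
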